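(* Let $\mathbf I_F$ be a weakly faithful generalized Fisher information and $\{\mathcal N^\theta_{A\to B}\}_\theta$ a family of quantum channels. Consider any $n$-round sequential strategy consisting of a $\theta$-independent input state $\rho_{R_1A_1}$ and $\theta$-independent channels $\mathcal S^i_{R_iB_i\to R_{i+1}A_{i+1}}$, $i=1,\dots,n-1$, and let $$\omega^\theta_{R_nB_n}:=(\mathcal N^\theta_{A_n\to B_n}\circ\mathcal S^{n-1}\circ\cdots\circ\mathcal S^1\circ\mathcal N^\theta_{A_1\to B_1})(\rho_{R_1A_1}).$$ Then $\mathbf I_F(\theta;\{\omega^\theta_{R_nB_n}\}_\theta)\le n\cdot\mathbf I^{\mathcal A}_F(\theta;\{\mathcal N^\theta_{A\to B}\}_\theta)$.
   Context: Finite-dimensional systems. A generalized Fisher information $\mathbf I_F$ assigns to each $\theta$ and each family $\{\rho^\theta_A\}_\theta$ of density operators an extended real number such that $\mathbf I_F(\theta;\{\rho^\theta_A\}_\theta)\ge\mathbf I_F(\theta;\{\mathcal N_{A\to B}(\rho^\theta_A)\}_\theta)$ for every $\theta$-independent quantum channel $\mathcal N$; it is weakly faithful if it vanishes on $\theta$-independent families. The amortized Fisher information of a channel family is $\mathbf I^{\mathcal A}_F(\theta;\{\mathcal N^\theta_{A\to B}\}_\theta):=\sup_{\{\rho^\theta_{RA}\}_\theta}[\mathbf I_F(\theta;\{\mathcal N^\theta_{A\to B}(\rho^\theta_{RA})\}_\theta)-\mathbf I_F(\theta;\{\rho^\theta_{RA}\}_\theta)]$, supremum over families of states with arbitrary reference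 system $R$. Channels act on the indicated subsystems and as identity elsewhere. *)

theory Defs
  imports "Jordan_Normal_Form.Matrix" "HOL-Library.Extended_Real"
begin

text \<open>Finite-dimensional quantum systems: operators on C^d are d x d complex matrices
  (type complex mat; the dimension is carried by the matrix).  Composite systems
  R (x) A are ordered with R first, so an operator on C^(dR*dA) is a dR x dR block
  matrix with dA x dA blocks.\<close>

definition mtrace :: "complex mat \<Rightarrow> complex" where
  "mtrace X = (\<Sum>i<dim_row X. X $$ (i, i))"

definition psd :: "nat \<Rightarrow> complex mat \<Rightarrow> bool" where
  "psd d X \<longleftrightarrow> X \<in> carrier_mat d d \<and>
     (\<forall>v \<in> carrier_vec d. Im (conjugate v \<bullet> (X *\<^sub>v v)) = 0 \<and> Re (conjugate v \<bullet> (X *\<^sub>v v)) \<ge> 0)"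

definition density :: "nat \<Rightarrow> complex mat \<Rightarrow> bool" where
  "density d X \<longleftrightarrow> psd d X \<and> mtrace X = 1"

definition blk :: "nat \<Rightarrow> nat \<Rightarrow> nat \<Rightarrow> complex mat \<Rightarrow> complex mat" where
  "blk dA a b X = mat dA dA (\<lambda>(k,l). X $$ (a * dA + k, b * dA + l))"

text \<open>(id_R (x) Phi)(X) for Phi : A \<rightarrow> B, R of dimension dR: Phi applied blockwise.\<close>
definition id_tensor :: "nat \<Rightarrow> nat \<Rightarrow> nat \<Rightarrow> (complex mat \<Rightarrow> complex mat) \<Rightarrow> complex mat \<Rightarrow> complex mat" where
  "id_tensor dR dA dB \<Phi> X =
     mat (dR * dB) (dR * dB) (\<lambda>(i,j). \<Phi> (blk dA (i div dB) (j div dB) X) $$ (i mod dB, j mod dB))"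

definition channel :: "nat \<Rightarrow> nat \<Rightarrow> (complex mat \<Rightarrow> complex mat) \<Rightarrow> bool" where
  "channel dA dB \<Phi> \<longleftrightarrow>
     (\<forall>X \<in> carrier_mat dA dA. \<Phi> X \<in> carrier_mat dB dB) \<and>
     (\<forall>X \<in> carrier_mat dA dA. \<forall>Y \<in> carrier_mat dA dA. \<forall>a b :: complex.
        \<Phi> (a \<cdot>\<^sub>m X + b \<cdot>\<^sub>m Y) = a \<cdot>\<^sub>m \<Phi> X + b \<cdot>\<^sub>m \<Phi> Y) \<and>
     (\<forall>X \<in> carrier_mat dA dA. mtrace (\<Phi> X) = mtrace X) \<and>
     (\<forall>k. \<forall>X. psd (k * dA) X \<longrightarrow> psd (k * dB) (id_tensor k dA dB \<Phi> X))"

definition gen_fisher :: "(real \<Rightarrow> (real \<Rightarrow> complex mat) \<Rightarrow> ereal) \<Rightarrow> bool" where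
  "gen_fisher I \<longleftrightarrow>
     (\<forall>dA dB \<Phi> \<rho> \<theta>. channel dA dB \<Phi> \<longrightarrow> (\<forall>t. density dA (\<rho> t)) \<longrightarrow>
        I \<theta> (\<lambda>t. \<Phi> (\<rho> t)) \<le> I \<theta> \<rho>)"

definition weakly_faithful :: "(real \<Rightarrow> (real \<Rightarrow> complex mat) \<Rightarrow> ereal) \<Rightarrow> bool" where
  "weakly_faithful I \<longleftrightarrow> (\<forall>d \<sigma> \<theta>. density d \<sigma> \<longrightarrow> I \<theta> (\<lambda>t. \<sigma>) = 0)"

definition amortized_fisher ::
  "(real \<Rightarrow> (real \<Rightarrow> complex mat) \<Rightarrow> ereal) \<Rightarrow> nat \<Rightarrow> nat \<Rightarrow> real \<Rightarrow> (real \<Rightarrow> complex mat \<Rightarrow> complex mat) \<Rightarrow> ereal" where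
  "amortized_fisher I dA dB \<theta> N =
     (SUP p \<in> {(dR, \<rho>). \<forall>t. density (dR * dA) (\<rho> t)}.
        I \<theta> (\<lambda>t. id_tensor (fst p) dA dB (N t) (snd p t)) - I \<theta> (snd p))"

text \<open>Output of the n-round sequential strategy: rho on R_1 A_1, channels
  S i : R_i B_i \<rightarrow> R_(i+1) A_(i+1), r i = dimension of R_i.
  seq_out r rho S N t k is the state on R_(k+1) B_(k+1) after k+1 uses of N t.\<close>
fun seq_out :: "(nat \<Rightarrow> nat) \<Rightarrow> nat \<Rightarrow> nat \<Rightarrow> complex mat \<Rightarrow> (nat \<Rightarrow> complex mat \<Rightarrow> complex mat)
    \<Rightarrow> (real \<Rightarrow> complex mat \<Rightarrow> complex mat) \<Rightarrow> real \<Rightarrow> nat \<Rightarrow> complex mat" where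
  "seq_out r dA dB \<rho> S N t 0 = id_tensor (r 1) dA dB (N t) \<rho>"
| "seq_out r dA dB \<rho> S N t (Suc k) =
     id_tensor (r (Suc (Suc k))) dA dB (N t) (S (Suc k) (seq_out r dA dB \<rho> S N t k))"

end

theory Submission
  imports Defs
begin

lemma ereal_step: "x - y \<le> (A::ereal) \<Longrightarrow> y \<le> ereal k * A \<Longrightarrow> k \<ge> 0 \<Longrightarrow> x \<le> ereal (k+1) * A"
  apply (cases x; cases y; cases A) apply (auto simp: algebra_simps split: if_splits)
  done

lemma sum_split: "(\<Sum>i<a+b. f i) = (\<Sum>i<a. f i) + (\<Sum>j<b. f (a + j))" for f :: "nat \<Rightarrow> 'a::comm_monoid_add"
  by (induction b) (auto simp: add.assoc)

lemma sum_grp: "(\<Sum>i<m*n. f i) = (\<Sum>a<m. \<Sum>b<n. f (a*n+b))" for f :: "nat \<Rightarrow> 'a::comm_monoid_add"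
proof (induction m)
  case (Suc m) then show ?case using sum_split[of f "m*n" n] by (simp add: add.commute)
qed simp

lemma id_tensor_trace:
  assumes ch: "channel dA dB \<Phi>" and X: "X \<in> carrier_mat (dR*dA) (dR*dA)"
  shows "mtrace (id_tensor dR dA dB \<Phi> X) = mtrace X"
proof -
  have car: "\<And>a. \<Phi> (blk dA a a X) \<in> carrier_mat dB dB"
    using ch unfolding channel_def blk_def by auto
  have tp: "\<And>a. mtrace (\<Phi> (blk dA a a X)) = mtrace (blk dA a a X)"
    using ch unfolding channel_def blk_def by auto
  have "mtrace (id_tensor dR dA dB \<Phi> X)
      = (\<Sum>i<dR*dB. \<Phi> (blk dA (i div dB) (i div dB) X) $$ (i mod dB, i mod dB))"
    unfolding mtrace_def id_tensor_def by simp
  also have "\<dots> = (\<Sum>a<dR. \<Sum>b<dB. \<Phi> (blk dA a a X) $$ (b, b))"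
    by (subst sum_grp) (auto intro!: sum.cong)
  also have "\<dots> = (\<Sum>a<dR. mtrace (blk dA a a X))"
  proof (rule sum.cong)
    fix a assume "a \<in> {..<dR}"
    have "(\<Sum>b<dB. \<Phi> (blk dA a a X) $$ (b, b)) = mtrace (\<Phi> (blk dA a a X))"
      using car[of a] by (simp add: mtrace_def)
    thus "(\<Sum>b<dB. \<Phi> (blk dA a a X) $$ (b, b)) = mtrace (blk dA a a X)" using tp by simp
  qed simp
  also have "\<dots> = (\<Sum>a<dR. \<Sum>b<dA. X $$ (a*dA+b, a*dA+b))"
    by (auto simp: mtrace_def blk_def intro!: sum.cong)
  also have "\<dots> = mtrace X"
    using X by (simp add: mtrace_def sum_grp)
  finally show ?thesis .
qed

lemma id_tensor_density:
  assumes ch: "channel dA dB \<Phi>" and X: "density (dR*dA) X"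
  shows "density (dR*dB) (id_tensor dR dA dB \<Phi> X)"
proof -
  have "psd (dR*dB) (id_tensor dR dA dB \<Phi> X)"
    using ch X unfolding channel_def density_def by blast
  moreover have "X \<in> carrier_mat (dR*dA) (dR*dA)" using X unfolding density_def psd_def by auto
  ultimately show ?thesis using X id_tensor_trace[OF ch] unfolding density_def by auto
qed

lemma channel_density:
  assumes ch: "channel d1 d2 \<Phi>" and X: "density d1 X"
  shows "density d2 (\<Phi> X)"
proof -
  have Xc: "X \<in> carrier_mat d1 d1" using X unfolding density_def psd_def by auto
  have Pc: "\<Phi> X \<in> carrier_mat d2 d2" using ch Xc unfolding channel_def by auto
  have b: "blk d1 0 0 X = X" using Xc unfolding blk_def by (auto intro!: eq_matI)
  have e: "id_tensor 1 d1 d2 \<Phi> X = \<Phi> X"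
    using Pc unfolding id_tensor_def by (auto simp: b intro!: eq_matI)
  have "psd (1*d1) X" using X unfolding density_def by simp
  hence "psd (1*d2) (id_tensor 1 d1 d2 \<Phi> X)" using ch unfolding channel_def by blast
  hence "psd d2 (\<Phi> X)" using e by simp
  moreover have "mtrace (\<Phi> X) = mtrace X" using ch Xc unfolding channel_def by auto
  ultimately show ?thesis using X unfolding density_def by auto
qed

theorem mainTheorem5:
  fixes I :: "real \<Rightarrow> (real \<Rightarrow> complex mat) \<Rightarrow> ereal"
    and dA dB n :: nat and r :: "nat \<Rightarrow> nat"
    and \<rho> :: "complex mat" and S :: "nat \<Rightarrow> complex mat \<Rightarrow> complex mat"
    and N :: "real \<Rightarrow> complex mat \<Rightarrow> complex mat" and \<theta> :: real
  assumes "gen_fisher I" and "weakly_faithful I"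
    and "\<forall>t. channel dA dB (N t)"
    and "n \<ge> 1"
    and "density (r 1 * dA) \<rho>"
    and "\<forall>i. 1 \<le> i \<and> i \<le> n - 1 \<longrightarrow> channel (r i * dB) (r (Suc i) * dA) (S i)"
  shows "I \<theta> (\<lambda>t. seq_out r dA dB \<rho> S N t (n - 1)) \<le> ereal (real n) * amortized_fisher I dA dB \<theta> N"
proof -
  note gf = assms(1) and wf = assms(2) and chN = assms(3) and rho = assms(5) and chS = assms(6)
  define A where "A = amortized_fisher I dA dB \<theta> N"
  define sig where "sig k t = (if k = 0 then \<rho> else S k (seq_out r dA dB \<rho> S N t (k - 1)))" for k t
  have om: "seq_out r dA dB \<rho> S N t k = id_tensor (r (Suc k)) dA dB (N t) (sig k t)" for k t
    by (cases k) (simp_all add: sig_def)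
  have amort: "I \<theta> (\<lambda>t. seq_out r dA dB \<rho> S N t k) - I \<theta> (sig k) \<le> A"
    if d: "\<forall>t. density (r (Suc k) * dA) (sig k t)" for k
  proof -
    have "(r (Suc k), sig k) \<in> {(dR, \<rho>). \<forall>t. density (dR * dA) (\<rho> t)}" using d by simp
    hence "(\<lambda>p. I \<theta> (\<lambda>t. id_tensor (fst p) dA dB (N t) (snd p t)) - I \<theta> (snd p)) (r (Suc k), sig k) \<le> A"
      unfolding A_def amortized_fisher_def by (rule SUP_upper)
    thus ?thesis by (simp add: om)
  qed
  have main: "k \<le> n - 1 \<longrightarrow> (\<forall>t. density (r (Suc k) * dB) (seq_out r dA dB \<rho> S N t k)) \<and>
      I \<theta> (\<lambda>t. seq_out r dA dB \<rho> S N t k) \<le> ereal (real (Suc k)) * A" for k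
  proof (induction k)
    case 0
    have ds: "\<forall>t. density (r (Suc 0) * dA) (sig 0 t)" using rho by (simp add: sig_def)
    have z: "I \<theta> (sig 0) = 0"
      using wf rho unfolding weakly_faithful_def by (simp add: sig_def[abs_def])
    show ?case
    proof (intro impI conjI)
      show "\<forall>t. density (r (Suc 0) * dB) (seq_out r dA dB \<rho> S N t 0)"
        using ds chN id_tensor_density unfolding om by blast
      have "I \<theta> (\<lambda>t. seq_out r dA dB \<rho> S N t 0) - I \<theta> (sig 0) \<le> A" using amort ds by blast
      moreover have "I \<theta> (sig 0) \<le> ereal 0 * A" using z by (simp add: zero_ereal_def[symmetric])
      ultimately show "I \<theta> (\<lambda>t. seq_out r dA dB \<rho> S N t 0) \<le> ereal (real (Suc 0)) * A"
        using ereal_step[of _ _ A 0] by simp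
    qed
  next
    case (Suc k)
    show ?case
    proof (intro impI)
      assume le: "Suc k \<le> n - 1"
      with Suc.IH have d: "\<forall>t. density (r (Suc k) * dB) (seq_out r dA dB \<rho> S N t k)"
        and b: "I \<theta> (\<lambda>t. seq_out r dA dB \<rho> S N t k) \<le> ereal (real (Suc k)) * A" by auto
      have ch: "channel (r (Suc k) * dB) (r (Suc (Suc k)) * dA) (S (Suc k))" using chS le by auto
      have ds: "\<forall>t. density (r (Suc (Suc k)) * dA) (sig (Suc k) t)"
        using d ch channel_density by (simp add: sig_def)
      have dp: "I \<theta> (sig (Suc k)) \<le> I \<theta> (\<lambda>t. seq_out r dA dB \<rho> S N t k)"
      proof -
        have "I \<theta> (\<lambda>t. S (Suc k) (seq_out r dA dB \<rho> S N t k)) \<le> I \<theta> (\<lambda>t. seq_out r dA dB \<rho> S N t k)"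
        proof -
          have H: "\<And>dA dB \<Phi> \<rho> \<theta>. channel dA dB \<Phi> \<Longrightarrow> (\<forall>t. density dA (\<rho> t)) \<Longrightarrow> I \<theta> (\<lambda>t. \<Phi> (\<rho> t)) \<le> I \<theta> \<rho>"
            using gf unfolding gen_fisher_def by blast
          show ?thesis using H[of _ _ "S (Suc k)" "\<lambda>t. seq_out r dA dB \<rho> S N t k", OF ch] d by simp
        qed
        thus ?thesis by (simp add: sig_def[abs_def])
      qed
      have "I \<theta> (\<lambda>t. seq_out r dA dB \<rho> S N t (Suc k)) - I \<theta> (sig (Suc k)) \<le> A"
        using amort ds by blast
      moreover have "I \<theta> (sig (Suc k)) \<le> ereal (real (Suc k)) * A" using dp b by simp
      ultimately have "I \<theta> (\<lambda>t. seq_out r dA dB \<rho> S N t (Suc k)) \<le> ereal (real (Suc k) + 1) * A"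
        by (rule ereal_step) simp
      moreover have "\<forall>t. density (r (Suc (Suc k)) * dB) (seq_out r dA dB \<rho> S N t (Suc k))"
        using ds chN id_tensor_density unfolding om[of _ "Suc k"] by blast
      ultimately show "(\<forall>t. density (r (Suc (Suc k)) * dB) (seq_out r dA dB \<rho> S N t (Suc k))) \<and>
          I \<theta> (\<lambda>t. seq_out r dA dB \<rho> S N t (Suc k)) \<le> ereal (real (Suc (Suc k))) * A"
        by (simp add: add.commute)
    qed
  qed
  have "Suc (n - 1) = n" using assms(4) by simp
  thus ?thesis using main[of "n - 1"] unfolding A_def by simp
qed

end
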